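(* Let $G$ be a finite group and let $S$ be a set of non-identity arrows of $G$. Let $(K,H)$ be a non-identity arrow of $G$ and let $N=P(K)$. If $(K,H)\in\langle S\rangle$, then there exists a subset $S'\subseteq S_N$ such that $(K,H)\in\langle S'\rangle$ and at most one element of $S'$ is not contained in $S_{N+1}$.
   Context: For a finite group $G$, an arrow is a pair $(K,H)$ of subgroups with $K\leqslant H$; it is an identity arrow if $K=H$. A $G$-transfer system is a set of arrows containing all identity arrows and closed under composition ($(A,B),(B,C)\Rightarrow(A,C)$), conjugation ($(A,B)\Rightarrow(gAg^{-1},gBg^{-1})$ for all $g\in G$) and restriction ($(A,B)$ and $L\leqslant B\Rightarrow(A\cap L,L)$). For a set $S$ of arrows, $\langle S\rangle$ is the smallest transfer system containing $S$. For a subgroup $K$, $P(K)$ is the sum of the exponents in the prime factorization of $|K|$. For $N\in\mathbb{N}$, $S_N=\{(K,H)\in S: P(K)\geqslant N\}$. *)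

theory Defs
  imports "HOL-Algebra.Algebra" "HOL-Computational_Algebra.Primes"
begin

definition arrows :: "('a, 'b) monoid_scheme \<Rightarrow> ('a set \<times> 'a set) set" where
  "arrows G = {(K, H). subgroup K G \<and> subgroup H G \<and> K \<subseteq> H}"

definition conj_set :: "('a, 'b) monoid_scheme \<Rightarrow> 'a \<Rightarrow> 'a set \<Rightarrow> 'a set" where
  "conj_set G g A = (\<lambda>a. g \<otimes>\<^bsub>G\<^esub> a \<otimes>\<^bsub>G\<^esub> inv\<^bsub>G\<^esub> g) ` A"

definition transfer_system :: "('a, 'b) monoid_scheme \<Rightarrow> ('a set \<times> 'a set) set \<Rightarrow> bool" where
  "transfer_system G T \<longleftrightarrow>
     T \<subseteq> arrows G \<and>
     (\<forall>H. subgroup H G \<longrightarrow> (H, H) \<in> T) \<and>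
     (\<forall>A B C. (A, B) \<in> T \<longrightarrow> (B, C) \<in> T \<longrightarrow> (A, C) \<in> T) \<and>
     (\<forall>A B g. (A, B) \<in> T \<longrightarrow> g \<in> carrier G \<longrightarrow> (conj_set G g A, conj_set G g B) \<in> T) \<and>
     (\<forall>A B L. (A, B) \<in> T \<longrightarrow> subgroup L G \<longrightarrow> L \<subseteq> B \<longrightarrow> (A \<inter> L, L) \<in> T)"

definition gen_ts :: "('a, 'b) monoid_scheme \<Rightarrow> ('a set \<times> 'a set) set \<Rightarrow> ('a set \<times> 'a set) set" where
  "gen_ts G S = \<Inter> {T. transfer_system G T \<and> S \<subseteq> T}"

definition Pexp :: "'a set \<Rightarrow> nat" where
  "Pexp K = size (prime_factorization (card K))"

definition arrows_ge :: "('a set \<times> 'a set) set \<Rightarrow> nat \<Rightarrow> ('a set \<times> 'a set) set" where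
  "arrows_ge S N = {(K, H) \<in> S. Pexp K \<ge> N}"

end

theory Submission
  imports Defs
begin

lemma card_sub_dvd:
  assumes "group G" "subgroup A G" "subgroup B G" "A \<subseteq> B"
  shows "card A dvd card B"
proof -
  interpret group G by fact
  have g: "group (G\<lparr>carrier := B\<rparr>)" using assms(3) subgroup_imp_group by blast
  have s: "subgroup A (G\<lparr>carrier := B\<rparr>)" using subgroup_incl assms by blast
  have "card (rcosets\<^bsub>G\<lparr>carrier := B\<rparr>\<^esub> A) * card A = order (G\<lparr>carrier := B\<rparr>)"
    using group.lagrange[OF g s] .
  then have "card (rcosets\<^bsub>G\<lparr>carrier := B\<rparr>\<^esub> A) * card A = card B"
    by (simp add: order_def)
  then show ?thesis by (metis dvd_triv_right)
qed

lemma Pexp_mono: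
  assumes "group G" "finite (carrier G)" "subgroup A G" "subgroup B G" "A \<subseteq> B"
  shows "Pexp A \<le> Pexp B" and "A \<noteq> B \<Longrightarrow> Pexp A < Pexp B"
proof -
  have d: "card A dvd card B" using card_sub_dvd[OF assms(1,3,4,5)] .
  have fB: "finite B" using finite_subset[OF subgroup.subset[OF assms(4)] assms(2)] .
  have fA: "finite A" using finite_subset[OF assms(5) fB] .
  have oA: "\<one>\<^bsub>G\<^esub> \<in> A" using subgroup.one_closed[OF assms(3)] .
  have oB: "\<one>\<^bsub>G\<^esub> \<in> B" using subgroup.one_closed[OF assms(4)] .
  have nA: "card A \<noteq> 0" using fA oA by (simp add: card_eq_0_iff) blast
  have nB: "card B \<noteq> 0" using fB oB by (simp add: card_eq_0_iff) blast
  have sub: "prime_factorization (card A) \<subseteq># prime_factorization (card B)"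
    using prime_factorization_subset_iff_dvd[OF nA nB] d by simp
  show "Pexp A \<le> Pexp B" unfolding Pexp_def using size_mset_mono[OF sub] .
  assume ne: "A \<noteq> B"
  have lt: "card A < card B" using psubset_card_mono[OF fB] ne assms(5) by blast
  have "prime_factorization (card A) \<noteq> prime_factorization (card B)"
  proof
    assume e: "prime_factorization (card A) = prime_factorization (card B)"
    then have "card B dvd card A" using prime_factorization_subset_iff_dvd[OF nB nA] by simp
    then have "card B = card A" using d by (rule dvd_antisym)
    then show False using lt by simp
  qed
  hence "prime_factorization (card A) \<subset># prime_factorization (card B)" using sub
    by (simp add: subset_mset.le_neq_trans)
  then show "Pexp A < Pexp B" unfolding Pexp_def by (rule mset_subset_size)
qed

lemma conj_set_coset:
  "conj_set G g A = g <#\<^bsub>G\<^esub> A #>\<^bsub>G\<^esub> inv\<^bsub>G\<^esub> g"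
  unfolding conj_set_def l_coset_def r_coset_def by auto

lemma conj_subgroup:
  assumes "group G" "subgroup A G" "g \<in> carrier G"
  shows "subgroup (conj_set G g A) G"
  unfolding conj_set_coset using group.subgroup_conjugation_is_surj2[OF assms(1) assms(3) assms(2)] .

lemma conj_mono:
  "A \<subseteq> B \<Longrightarrow> conj_set G g A \<subseteq> conj_set G g B"
  unfolding conj_set_def by auto

lemma Pexp_conj:
  assumes "group G" "subgroup A G" "g \<in> carrier G"
  shows "Pexp (conj_set G g A) = Pexp A"
proof -
  interpret group G by fact
  have "inj_on (\<lambda>a. g \<otimes>\<^bsub>G\<^esub> a \<otimes>\<^bsub>G\<^esub> inv\<^bsub>G\<^esub> g) A"
  proof (rule inj_onI)
    fix x y assume "x \<in> A" "y \<in> A" "g \<otimes>\<^bsub>G\<^esub> x \<otimes>\<^bsub>G\<^esub> inv\<^bsub>G\<^esub> g = g \<otimes>\<^bsub>G\<^esub> y \<otimes>\<^bsub>G\<^esub> inv\<^bsub>G\<^esub> g"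
    moreover have "x \<in> carrier G" "y \<in> carrier G" using \<open>x \<in> A\<close> \<open>y \<in> A\<close> subgroup.mem_carrier[OF assms(2)] by auto
    ultimately show "x = y" using assms(3) by simp
  qed
  then have "card (conj_set G g A) = card A" unfolding conj_set_def by (rule card_image)
  then show ?thesis unfolding Pexp_def by simp
qed

lemma arrows_ts:
  assumes "group G"
  shows "transfer_system G (arrows G)"
proof -
  have 4: "(conj_set G g A, conj_set G g B) \<in> arrows G"
    if "(A, B) \<in> arrows G" "g \<in> carrier G" for A B g
    using that conj_subgroup[OF assms] conj_mono[of A B G g] unfolding arrows_def by auto
  have 5: "(A \<inter> L, L) \<in> arrows G"
    if "(A, B) \<in> arrows G" "subgroup L G" for A B L
    using that group.subgroups_Inter_pair[OF assms] unfolding arrows_def by auto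
  have 3: "(A, C) \<in> arrows G" if "(A, B) \<in> arrows G" "(B, C) \<in> arrows G" for A B C
    using that unfolding arrows_def by auto
  have 2: "(H, H) \<in> arrows G" if "subgroup H G" for H using that unfolding arrows_def by auto
  show ?thesis unfolding transfer_system_def using 2 3 4 5 by blast
qed

lemma ts_D:
  assumes "transfer_system G T"
  shows "T \<subseteq> arrows G"
    and "subgroup H G \<Longrightarrow> (H, H) \<in> T"
    and "(A, B) \<in> T \<Longrightarrow> (B, C) \<in> T \<Longrightarrow> (A, C) \<in> T"
    and "(A, B) \<in> T \<Longrightarrow> g \<in> carrier G \<Longrightarrow> (conj_set G g A, conj_set G g B) \<in> T"
    and "(A, B) \<in> T \<Longrightarrow> subgroup L G \<Longrightarrow> L \<subseteq> B \<Longrightarrow> (A \<inter> L, L) \<in> T"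
  using assms unfolding transfer_system_def by blast+

lemma gen_ts_ts:
  assumes "group G" "S \<subseteq> arrows G"
  shows "transfer_system G (gen_ts G S)"
proof -
  let ?F = "{T. transfer_system G T \<and> S \<subseteq> T}"
  have ne: "arrows G \<in> ?F" using arrows_ts assms by blast
  have 1: "gen_ts G S \<subseteq> arrows G" unfolding gen_ts_def using ne by (rule Inter_lower)
  have 2: "(H, H) \<in> gen_ts G S" if "subgroup H G" for H
    unfolding gen_ts_def
  proof (rule InterI)
    fix T assume "T \<in> ?F" then show "(H, H) \<in> T" using ts_D(2)[OF _ that, of T] by simp
  qed
  have 3: "(A, C) \<in> gen_ts G S" if "(A, B) \<in> gen_ts G S" "(B, C) \<in> gen_ts G S" for A B C
    unfolding gen_ts_def
  proof (rule InterI)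
    fix T assume T: "T \<in> ?F"
    have "(A, B) \<in> T" "(B, C) \<in> T"
      using InterD[OF that(1)[unfolded gen_ts_def] T] InterD[OF that(2)[unfolded gen_ts_def] T] by auto
    then show "(A, C) \<in> T" using ts_D(3)[of G T A B C] T by simp
  qed
  have 4: "(conj_set G g A, conj_set G g B) \<in> gen_ts G S"
    if "(A, B) \<in> gen_ts G S" "g \<in> carrier G" for A B g
    unfolding gen_ts_def
  proof (rule InterI)
    fix T assume T: "T \<in> ?F"
    have "(A, B) \<in> T" using InterD[OF that(1)[unfolded gen_ts_def] T] .
    then show "(conj_set G g A, conj_set G g B) \<in> T" using ts_D(4)[of G T A B g] T that(2) by simp
  qed
  have 5: "(A \<inter> L, L) \<in> gen_ts G S"
    if "(A, B) \<in> gen_ts G S" "subgroup L G" "L \<subseteq> B" for A B L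
    unfolding gen_ts_def
  proof (rule InterI)
    fix T assume T: "T \<in> ?F"
    have "(A, B) \<in> T" using InterD[OF that(1)[unfolded gen_ts_def] T] .
    then show "(A \<inter> L, L) \<in> T" using ts_D(5)[of G T A B L] T that(2,3) by simp
  qed
  show ?thesis unfolding transfer_system_def
    apply (intro conjI allI impI)
        apply (rule 1)
       apply (erule 2)
      apply (erule (1) 3)
     apply (erule (1) 4)
    apply (erule (2) 5)
    done
qed

lemma gen_ts_least:
  "transfer_system G T \<Longrightarrow> S \<subseteq> T \<Longrightarrow> gen_ts G S \<subseteq> T"
  unfolding gen_ts_def by blast

lemma gen_ts_inc: "S \<subseteq> gen_ts G S"
  unfolding gen_ts_def by blast

lemma gen_ts_mono: "S \<subseteq> S' \<Longrightarrow> gen_ts G S \<subseteq> gen_ts G S'"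
  unfolding gen_ts_def by blast

theorem lemma2p12:
  fixes G :: "('a, 'b) monoid_scheme"
    and S :: "('a set \<times> 'a set) set"
    and K H :: "'a set"
  assumes "group G"
    and "finite (carrier G)"
    and "S \<subseteq> arrows G"
    and "\<forall>(A, B) \<in> S. A \<noteq> B"
    and "(K, H) \<in> arrows G"
    and "K \<noteq> H"
    and "N = Pexp K"
    and "(K, H) \<in> gen_ts G S"
  shows "\<exists>S'. S' \<subseteq> arrows_ge S N \<and> (K, H) \<in> gen_ts G S' \<and>
           (\<forall>x \<in> S' - arrows_ge S (N + 1). \<forall>y \<in> S' - arrows_ge S (N + 1). x = y)"
proof -
  define Qp where "Qp U V \<longleftrightarrow> (\<exists>S'. S' \<subseteq> arrows_ge S (Pexp U) \<and> (U, V) \<in> gen_ts G S' \<and>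
           (\<forall>x \<in> S' - arrows_ge S (Pexp U + 1). \<forall>y \<in> S' - arrows_ge S (Pexp U + 1). x = y))"
    for U V
  define T where "T = {(U, V) \<in> arrows G. Qp U V}"
  have ge_arr: "arrows_ge S n \<subseteq> arrows G" for n using assms(3) unfolding arrows_ge_def by auto
  have tsS: "transfer_system G (gen_ts G S')" if "S' \<subseteq> arrows_ge S n" for S' n
    using gen_ts_ts[OF assms(1)] that ge_arr by blast
  have ge_mono: "arrows_ge S m \<subseteq> arrows_ge S n" if "n \<le> m" for m n
    using that unfolding arrows_ge_def by auto
  have "transfer_system G T"
    unfolding transfer_system_def
  proof (intro conjI allI impI)
    show "T \<subseteq> arrows G" unfolding T_def by auto
  next
    fix U assume "subgroup U G"
    moreover have "Qp U U"
    proof -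
      have "transfer_system G (gen_ts G {})" using tsS[of "{}" 0] by blast
      then have "(U, U) \<in> gen_ts G {}" using \<open>subgroup U G\<close> unfolding transfer_system_def by blast
      then show ?thesis unfolding Qp_def by blast
    qed
    ultimately show "(U, U) \<in> T" unfolding T_def arrows_def by auto
  next
    fix A B C assume ab: "(A, B) \<in> T" and bc: "(B, C) \<in> T"
    show "(A, C) \<in> T"
    proof (cases "A = B")
      case True then show ?thesis using bc by simp
    next
      case False
      have arr: "(A, B) \<in> arrows G" "(B, C) \<in> arrows G" using ab bc unfolding T_def by auto
      have lt: "Pexp A < Pexp B" using Pexp_mono(2)[OF assms(1,2)] arr False unfolding arrows_def by auto
      obtain S1 where S1: "S1 \<subseteq> arrows_ge S (Pexp A)" "(A, B) \<in> gen_ts G S1"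
        "\<forall>x \<in> S1 - arrows_ge S (Pexp A + 1). \<forall>y \<in> S1 - arrows_ge S (Pexp A + 1). x = y"
        using ab unfolding T_def Qp_def by auto
      obtain S2 where S2: "S2 \<subseteq> arrows_ge S (Pexp B)" "(B, C) \<in> gen_ts G S2"
        using bc unfolding T_def Qp_def by auto
      have S2': "S2 \<subseteq> arrows_ge S (Pexp A + 1)" using S2(1) ge_mono[of "Pexp A + 1" "Pexp B"] lt by auto
      have S2'': "S2 \<subseteq> arrows_ge S (Pexp A)" using S2' ge_mono[of "Pexp A" "Pexp A + 1"] by auto
      have U: "S1 \<union> S2 \<subseteq> arrows_ge S (Pexp A)" using S1(1) S2'' by auto
      have "(A, B) \<in> gen_ts G (S1 \<union> S2)" "(B, C) \<in> gen_ts G (S1 \<union> S2)"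
        using S1(2) S2(2) gen_ts_mono[of S1 "S1 \<union> S2" G] gen_ts_mono[of S2 "S1 \<union> S2" G] by auto
      then have "(A, C) \<in> gen_ts G (S1 \<union> S2)" using tsS[OF U] unfolding transfer_system_def by blast
      moreover have "arrows G \<noteq> {}" using arr by auto
      moreover have "(A, C) \<in> arrows G" using arr unfolding arrows_def by auto
      moreover have "\<forall>x \<in> (S1 \<union> S2) - arrows_ge S (Pexp A + 1). \<forall>y \<in> (S1 \<union> S2) - arrows_ge S (Pexp A + 1). x = y"
        using S1(3) S2' by blast
      ultimately have "Qp A C" unfolding Qp_def using U by blast
      then show ?thesis using \<open>(A, C) \<in> arrows G\<close> unfolding T_def by auto
    qed
  next
    fix A B g assume ab: "(A, B) \<in> T" and g: "g \<in> carrier G"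
    have arr: "(A, B) \<in> arrows G" using ab unfolding T_def by auto
    have sA: "subgroup A G" using arr unfolding arrows_def by auto
    have arr2: "(conj_set G g A, conj_set G g B) \<in> arrows G"
      using arr conj_subgroup[OF assms(1) _ g] conj_mono[of A B G g] unfolding arrows_def by auto
    obtain S1 where S1: "S1 \<subseteq> arrows_ge S (Pexp A)" "(A, B) \<in> gen_ts G S1"
        "\<forall>x \<in> S1 - arrows_ge S (Pexp A + 1). \<forall>y \<in> S1 - arrows_ge S (Pexp A + 1). x = y"
      using ab unfolding T_def Qp_def by auto
    have "(conj_set G g A, conj_set G g B) \<in> gen_ts G S1"
      using tsS[OF S1(1)] S1(2) g unfolding transfer_system_def by blast
    then have "Qp (conj_set G g A) (conj_set G g B)"
      unfolding Qp_def Pexp_conj[OF assms(1) sA g] using S1 by blast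
    then show "(conj_set G g A, conj_set G g B) \<in> T" using arr2 unfolding T_def by auto
  next
    fix A B L assume ab: "(A, B) \<in> T" and L: "subgroup L G" and LB: "L \<subseteq> B"
    have arr: "(A, B) \<in> arrows G" using ab unfolding T_def by auto
    have sA: "subgroup A G" using arr unfolding arrows_def by auto
    have sAL: "subgroup (A \<inter> L) G" using group.subgroups_Inter_pair[OF assms(1) sA L] .
    have arr2: "(A \<inter> L, L) \<in> arrows G" using sAL L unfolding arrows_def by auto
    obtain S1 where S1: "S1 \<subseteq> arrows_ge S (Pexp A)" "(A, B) \<in> gen_ts G S1"
        "\<forall>x \<in> S1 - arrows_ge S (Pexp A + 1). \<forall>y \<in> S1 - arrows_ge S (Pexp A + 1). x = y"
      using ab unfolding T_def Qp_def by auto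
    have in1: "(A \<inter> L, L) \<in> gen_ts G S1"
      using tsS[OF S1(1)] S1(2) L LB unfolding transfer_system_def by blast
    have "Qp (A \<inter> L) L"
    proof (cases "A \<inter> L = A")
      case True
      then have "Pexp (A \<inter> L) = Pexp A" by simp
      then show ?thesis unfolding Qp_def using S1 in1 by auto
    next
      case False
      have lt: "Pexp (A \<inter> L) < Pexp A" using Pexp_mono(2)[OF assms(1,2) sAL sA] False by auto
      have "S1 \<subseteq> arrows_ge S (Pexp (A \<inter> L) + 1)" using S1(1) ge_mono[of "Pexp (A \<inter> L) + 1" "Pexp A"] lt by auto
      moreover then have "S1 \<subseteq> arrows_ge S (Pexp (A \<inter> L))" using ge_mono[of "Pexp (A \<inter> L)" "Pexp (A \<inter> L) + 1"] by auto
      ultimately show ?thesis unfolding Qp_def using in1 by blast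
    qed
    then show "(A \<inter> L, L) \<in> T" using arr2 unfolding T_def by auto
  qed
  moreover have "S \<subseteq> T"
  proof
    fix x assume x: "x \<in> S"
    obtain A B where xe: "x = (A, B)" by (cases x)
    have "x \<in> arrows_ge S (Pexp A)" using x xe unfolding arrows_ge_def by auto
    moreover have "x \<in> gen_ts G {x}" using gen_ts_inc by blast
    ultimately have "Qp A B" unfolding Qp_def xe by (intro exI[of _ "{(A, B)}"]) auto
    then show "x \<in> T" using x xe assms(3) unfolding T_def by auto
  qed
  ultimately have "(K, H) \<in> T" using gen_ts_least assms(8) by blast
  then have "Qp K H" unfolding T_def by blast
  then show ?thesis unfolding Qp_def using assms(7) by blast
qed

end
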